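(* For every ternary cubic form $f$ whose Hessian $H(f)$ is defined (not identically zero), $R(f,H(f),-)=0$, i.e. $R(f,H(f),c)=0$ for every cubic form $c$.
   Context: $R$ is the alternating trilinear form on the space $\mathrm{Sym}^3\mathbb{C}^3$ of ternary cubic forms determined by $R(l^3,m^3,n^3)=(\det(l,m,n))^3$ for linear forms $l,m,n$, where $\det(l,m,n)$ is the determinant of their coefficient matrix. $H(f)=\det(\partial^2f/\partial x_i\partial x_j)$. *)

theory Defs
  imports Complex_Main
begin

text \<open>Ternary forms are represented by their coefficient functions:
  a monomial x^i y^j z^k is encoded as the triple (i,j,k), and a form is a map
  from monomials to complex coefficients (all but finitely many zero in practice).\<close>

type_synonym mon = "nat \<times> nat \<times> nat"
type_synonym form = "mon \<Rightarrow> complex"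

definition mdeg :: "mon \<Rightarrow> nat" where
  "mdeg m = (case m of (i, j, k) \<Rightarrow> i + j + k)"

definition is_form :: "nat \<Rightarrow> form \<Rightarrow> bool" where
  "is_form d f \<longleftrightarrow> (\<forall>m. mdeg m \<noteq> d \<longrightarrow> f m = 0)"

definition cut3 :: "form \<Rightarrow> form" where
  "cut3 f = (\<lambda>m. if mdeg m = 3 then f m else 0)"

definition padd :: "form \<Rightarrow> form \<Rightarrow> form" where
  "padd f g = (\<lambda>m. f m + g m)"

definition psub :: "form \<Rightarrow> form \<Rightarrow> form" where
  "psub f g = (\<lambda>m. f m - g m)"

definition pmul :: "form \<Rightarrow> form \<Rightarrow> form" where
  "pmul f g = (\<lambda>(i, j, k). \<Sum>a\<in>{0..i}. \<Sum>b\<in>{0..j}. \<Sum>c\<in>{0..k}.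
      f (a, b, c) * g (i - a, j - b, k - c))"

definition pderiv3 :: "nat \<Rightarrow> form \<Rightarrow> form" where
  "pderiv3 v f = (\<lambda>(i, j, k).
      if v = 0 then of_nat (i + 1) * f (i + 1, j, k)
      else if v = 1 then of_nat (j + 1) * f (i, j + 1, k)
      else of_nat (k + 1) * f (i, j, k + 1))"

definition hessian :: "form \<Rightarrow> form" where
  "hessian f = (let h = (\<lambda>a b. pderiv3 a (pderiv3 b f)) in
     psub (padd (padd (pmul (h 0 0) (pmul (h 1 1) (h 2 2)))
                       (pmul (h 0 1) (pmul (h 1 2) (h 2 0))))
                 (pmul (h 0 2) (pmul (h 1 0) (h 2 1))))
          (padd (padd (pmul (h 0 2) (pmul (h 1 1) (h 2 0)))
                       (pmul (h 0 1) (pmul (h 1 0) (h 2 2))))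
                 (pmul (h 0 0) (pmul (h 1 2) (h 2 1)))))"

type_synonym lin = "complex \<times> complex \<times> complex"

definition linform :: "lin \<Rightarrow> form" where
  "linform l = (case l of (a, b, c) \<Rightarrow>
     (\<lambda>m. if m = (1,0,0) then a else if m = (0,1,0) then b
          else if m = (0,0,1) then c else 0))"

definition cube :: "lin \<Rightarrow> form" where
  "cube l = pmul (linform l) (pmul (linform l) (linform l))"

definition det3 :: "lin \<Rightarrow> lin \<Rightarrow> lin \<Rightarrow> complex" where
  "det3 l m n = (case l of (a1, a2, a3) \<Rightarrow> case m of (b1, b2, b3) \<Rightarrow> case n of (c1, c2, c3) \<Rightarrow>
      a1 * b2 * c3 + a2 * b3 * c1 + a3 * b1 * c2
    - a3 * b2 * c1 - a2 * b1 * c3 - a1 * b3 * c2)"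

definition trilinear :: "(form \<Rightarrow> form \<Rightarrow> form \<Rightarrow> complex) \<Rightarrow> bool" where
  "trilinear T \<longleftrightarrow>
     (\<forall>a f f' g h. T (\<lambda>m. a * f m + f' m) g h = a * T f g h + T f' g h) \<and>
     (\<forall>a f g g' h. T f (\<lambda>m. a * g m + g' m) h = a * T f g h + T f g' h) \<and>
     (\<forall>a f g h h'. T f g (\<lambda>m. a * h m + h' m) = a * T f g h + T f g h')"

definition alternating3 :: "(form \<Rightarrow> form \<Rightarrow> form \<Rightarrow> complex) \<Rightarrow> bool" where
  "alternating3 T \<longleftrightarrow> (\<forall>f g. T f f g = 0 \<and> T f g f = 0 \<and> T g f f = 0)"

text \<open>The alternating trilinear form R on Sym^3 C^3 determined by
  R(l^3, m^3, n^3) = det(l,m,n)^3.  Forms are identified with their degree-3 parts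
  (R only depends on the degree-3 coefficients), making R unique.\<close>
definition R :: "form \<Rightarrow> form \<Rightarrow> form \<Rightarrow> complex" where
  "R = (THE T. trilinear T \<and> alternating3 T \<and>
          (\<forall>f g h. T f g h = T (cut3 f) (cut3 g) (cut3 h)) \<and>
          (\<forall>l m n. T (cube l) (cube m) (cube n) = (det3 l m n) ^ 3))"

end

theory Submission
  imports Defs
begin

lemma form1_eq: "is_form 1 u \<Longrightarrow> u (a,b,c) = (if a = 1 \<and> b = 0 \<and> c = 0 then u (1,0,0) else 0)
   + (if a = 0 \<and> b = 1 \<and> c = 0 then u (0,1,0) else 0) + (if a = 0 \<and> b = 0 \<and> c = 1 then u (0,0,1) else 0)"
  unfolding is_form_def mdeg_def
  apply (cases a; cases b; cases c)
  apply auto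
  done

lemma sum3_delta: "(\<Sum>a\<in>{0..i::nat}. \<Sum>b\<in>{0..j::nat}. \<Sum>c\<in>{0..k::nat}. (if a = a0 \<and> b = b0 \<and> c = c0 then X a b c else (0::complex)))
  = (if a0 \<le> i \<and> b0 \<le> j \<and> c0 \<le> k then X a0 b0 c0 else 0)"
proof -
  have 1: "\<And>a b. (\<Sum>c\<in>{0..k::nat}. (if a = a0 \<and> b = b0 \<and> c = c0 then X a b c else (0::complex)))
     = (if a = a0 \<and> b = b0 \<and> c0 \<le> k then X a b c0 else 0)"
    subgoal for a b by (cases "a = a0 \<and> b = b0") (auto simp: sum.delta')
    done
  have 2: "\<And>a. (\<Sum>b\<in>{0..j::nat}. (if a = a0 \<and> b = b0 \<and> c0 \<le> k then X a b c0 else (0::complex)))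
     = (if a = a0 \<and> b0 \<le> j \<and> c0 \<le> k then X a b0 c0 else 0)"
    subgoal for a by (cases "a = a0 \<and> c0 \<le> k") (auto simp: sum.delta')
    done
  show ?thesis unfolding 1 2 by (cases "b0 \<le> j \<and> c0 \<le> k") (auto simp: sum.delta')
qed

lemma mif: "(if P then x else 0) * (y::complex) = (if P then x*y else 0)" by simp

lemma pmul_lin: assumes "is_form 1 u"
  shows "pmul u g (i,j,k) = (if 0 < i then u (1,0,0) * g (i-1,j,k) else 0)
     + (if 0 < j then u (0,1,0) * g (i,j-1,k) else 0) + (if 0 < k then u (0,0,1) * g (i,j,k-1) else 0)" (is "_ = ?rhs")
proof -
  have "pmul u g (i,j,k) = (\<Sum>a\<in>{0..i}. \<Sum>b\<in>{0..j}. \<Sum>c\<in>{0..k}.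
      (if a = 1 \<and> b = 0 \<and> c = 0 then u (1,0,0) * g (i - a, j - b, k - c) else 0)
   + (if a = 0 \<and> b = 1 \<and> c = 0 then u (0,1,0)* g (i - a, j - b, k - c) else 0) + (if a = 0 \<and> b = 0 \<and> c = 1 then u (0,0,1)* g (i - a, j - b, k - c) else 0))"
  proof -
    have e: "\<And>a b c. u (a,b,c) * g (i - a, j - b, k - c) = (if a = 1 \<and> b = 0 \<and> c = 0 then u (1,0,0) * g (i - a, j - b, k - c) else 0)
   + (if a = 0 \<and> b = 1 \<and> c = 0 then u (0,1,0)* g (i - a, j - b, k - c) else 0) + (if a = 0 \<and> b = 0 \<and> c = 1 then u (0,0,1)* g (i - a, j - b, k - c) else 0)"
      by (subst form1_eq[OF assms]) (simp only: distrib_right mif)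
    show ?thesis unfolding pmul_def by (simp only: e prod.case)
  qed
  also have "\<dots> = ?rhs"
    unfolding sum.distrib sum3_delta by auto
  finally show ?thesis .
qed
lemma form_pmul_lin: assumes u: "is_form 1 u" and g: "is_form d g" shows "is_form (Suc d) (pmul u g)"
  unfolding is_form_def
proof (intro allI impI)
  fix m :: mon assume m: "mdeg m \<noteq> Suc d"
  obtain i j k where mm: "m = (i,j,k)" by (cases m) auto
  have "(if 0 < i then u (1,0,0) * g (i-1,j,k) else 0) = 0" "(if 0 < j then u (0,1,0) * g (i,j-1,k) else 0) = 0"
     "(if 0 < k then u (0,0,1) * g (i,j,k-1) else 0) = 0"
    using g m unfolding is_form_def mdeg_def mm by auto
  then show "pmul u g m = 0" unfolding mm pmul_lin[OF u] by (simp only: add_0)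
qed

lemma form_linform: "is_form 1 (linform l)"
  unfolding is_form_def linform_def mdeg_def by (auto split: prod.splits)

lemma form_cube: "is_form 3 (cube l)"
  unfolding cube_def using form_pmul_lin[OF form_linform form_pmul_lin[OF form_linform form_linform]]
  by (simp add: numeral_eq_Suc)

lemma form_pderiv: "is_form (Suc d) f \<Longrightarrow> is_form d (pderiv3 v f)"
  unfolding is_form_def pderiv3_def mdeg_def by auto

lemma deg3_cases: "mdeg m = 3 \<Longrightarrow> m \<in> {(3,0,0),(0,3,0),(0,0,3),(2,1,0),(2,0,1),(1,2,0),(0,2,1),(1,0,2),(0,1,2),(1,1,1)}"
proof -
  assume a: "mdeg m = 3"
  obtain i j k where mm: "m = (i,j,k)" by (cases m) auto
  have k: "k = 3 - i - j" "i + j \<le> 3" using a unfolding mm mdeg_def by auto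
  have "i = 0 \<or> i = 1 \<or> i = 2 \<or> i = 3" "j = 0 \<or> j = 1 \<or> j = 2 \<or> j = 3" using k by auto
  then show ?thesis unfolding mm using k by (elim disjE) simp_all
qed

definition idx :: "nat \<Rightarrow> nat \<Rightarrow> nat \<Rightarrow> mon" where
  "idx i j k = ((if i = 0 then 1 else 0) + (if j = 0 then 1 else 0) + (if k = 0 then 1 else 0),
                (if i = 1 then 1 else 0) + (if j = 1 then 1 else 0) + (if k = 1 then 1 else 0),
                (if i = 2 then 1 else 0) + (if j = 2 then 1 else 0) + (if k = 2 then 1 else 0))"

definition wt :: "mon \<Rightarrow> complex" where
  "wt m = (case m of (a,b,c) \<Rightarrow> of_nat (fact a * fact b * fact c) / 6)"

definition Fc :: "form \<Rightarrow> nat \<Rightarrow> nat \<Rightarrow> nat \<Rightarrow> complex" where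
  "Fc f i j k = f (idx i j k) * wt (idx i j k)"

definition perm3 :: "(nat \<times> nat \<times> nat) set" where
  "perm3 = {(0,1,2),(1,2,0),(2,0,1),(0,2,1),(2,1,0),(1,0,2)}"

definition sg :: "nat \<times> nat \<times> nat \<Rightarrow> complex" where
  "sg p = (if p \<in> {(0,1,2),(1,2,0),(2,0,1)} then 1 else -1)"

definition R0 :: "form \<Rightarrow> form \<Rightarrow> form \<Rightarrow> complex" where
  "R0 f g h = (\<Sum>p\<in>perm3. \<Sum>q\<in>perm3. \<Sum>r\<in>perm3. sg p * sg q * sg r *
     (Fc f (fst p) (fst q) (fst r) * Fc g (fst (snd p)) (fst (snd q)) (fst (snd r))
      * Fc h (snd (snd p)) (snd (snd q)) (snd (snd r))))"

lemma Fc_lin: "Fc (\<lambda>m. a * f m + f' m) i j k = a * Fc f i j k + Fc f' i j k"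
  unfolding Fc_def by (simp add: algebra_simps)

lemma R0_tri: "trilinear R0"
  unfolding trilinear_def R0_def Fc_lin
  by (simp add: algebra_simps sum.distrib sum_distrib_left)

lemma idx_deg: "i \<le> 2 \<Longrightarrow> j \<le> 2 \<Longrightarrow> k \<le> 2 \<Longrightarrow> mdeg (idx i j k) = 3"
  unfolding idx_def mdeg_def by auto

lemma Fc_cut: "i \<le> 2 \<Longrightarrow> j \<le> 2 \<Longrightarrow> k \<le> 2 \<Longrightarrow> Fc (cut3 f) i j k = Fc f i j k"
  unfolding Fc_def cut3_def using idx_deg by simp

lemma perm3_le: "p \<in> perm3 \<Longrightarrow> fst p \<le> 2 \<and> fst (snd p) \<le> 2 \<and> snd (snd p) \<le> 2"
  unfolding perm3_def by auto

lemma R0_cut: "R0 f g h = R0 (cut3 f) (cut3 g) (cut3 h)"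
  unfolding R0_def
  by (intro sum.cong refl) (simp add: Fc_cut perm3_le)

lemma R0_explicit: "R0 f g h = (
    (-1) * f (0,0,3) * g (0,3,0) * h (3,0,0) +
    (1/3) * f (0,0,3) * g (1,2,0) * h (2,1,0) +
    (-1/3) * f (0,0,3) * g (2,1,0) * h (1,2,0) +
    (1) * f (0,0,3) * g (3,0,0) * h (0,3,0) +
    (1/3) * f (0,1,2) * g (0,2,1) * h (3,0,0) +
    (-1/9) * f (0,1,2) * g (1,1,1) * h (2,1,0) +
    (-1/9) * f (0,1,2) * g (1,2,0) * h (2,0,1) +
    (1/9) * f (0,1,2) * g (2,0,1) * h (1,2,0) +
    (1/9) * f (0,1,2) * g (2,1,0) * h (1,1,1) +
    (-1/3) * f (0,1,2) * g (3,0,0) * h (0,2,1) +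
    (-1/3) * f (0,2,1) * g (0,1,2) * h (3,0,0) +
    (1/9) * f (0,2,1) * g (1,0,2) * h (2,1,0) +
    (1/9) * f (0,2,1) * g (1,1,1) * h (2,0,1) +
    (-1/9) * f (0,2,1) * g (2,0,1) * h (1,1,1) +
    (-1/9) * f (0,2,1) * g (2,1,0) * h (1,0,2) +
    (1/3) * f (0,2,1) * g (3,0,0) * h (0,1,2) +
    (1) * f (0,3,0) * g (0,0,3) * h (3,0,0) +
    (-1/3) * f (0,3,0) * g (1,0,2) * h (2,0,1) +
    (1/3) * f (0,3,0) * g (2,0,1) * h (1,0,2) +
    (-1) * f (0,3,0) * g (3,0,0) * h (0,0,3) +
    (-1/9) * f (1,0,2) * g (0,2,1) * h (2,1,0) +
    (1/3) * f (1,0,2) * g (0,3,0) * h (2,0,1) +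
    (1/9) * f (1,0,2) * g (1,1,1) * h (1,2,0) +
    (-1/9) * f (1,0,2) * g (1,2,0) * h (1,1,1) +
    (-1/3) * f (1,0,2) * g (2,0,1) * h (0,3,0) +
    (1/9) * f (1,0,2) * g (2,1,0) * h (0,2,1) +
    (1/9) * f (1,1,1) * g (0,1,2) * h (2,1,0) +
    (-1/9) * f (1,1,1) * g (0,2,1) * h (2,0,1) +
    (-1/9) * f (1,1,1) * g (1,0,2) * h (1,2,0) +
    (1/9) * f (1,1,1) * g (1,2,0) * h (1,0,2) +
    (1/9) * f (1,1,1) * g (2,0,1) * h (0,2,1) +
    (-1/9) * f (1,1,1) * g (2,1,0) * h (0,1,2) +
    (-1/3) * f (1,2,0) * g (0,0,3) * h (2,1,0) +
    (1/9) * f (1,2,0) * g (0,1,2) * h (2,0,1) +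
    (1/9) * f (1,2,0) * g (1,0,2) * h (1,1,1) +
    (-1/9) * f (1,2,0) * g (1,1,1) * h (1,0,2) +
    (-1/9) * f (1,2,0) * g (2,0,1) * h (0,1,2) +
    (1/3) * f (1,2,0) * g (2,1,0) * h (0,0,3) +
    (-1/9) * f (2,0,1) * g (0,1,2) * h (1,2,0) +
    (1/9) * f (2,0,1) * g (0,2,1) * h (1,1,1) +
    (-1/3) * f (2,0,1) * g (0,3,0) * h (1,0,2) +
    (1/3) * f (2,0,1) * g (1,0,2) * h (0,3,0) +
    (-1/9) * f (2,0,1) * g (1,1,1) * h (0,2,1) +
    (1/9) * f (2,0,1) * g (1,2,0) * h (0,1,2) +
    (1/3) * f (2,1,0) * g (0,0,3) * h (1,2,0) +
    (-1/9) * f (2,1,0) * g (0,1,2) * h (1,1,1) +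
    (1/9) * f (2,1,0) * g (0,2,1) * h (1,0,2) +
    (-1/9) * f (2,1,0) * g (1,0,2) * h (0,2,1) +
    (1/9) * f (2,1,0) * g (1,1,1) * h (0,1,2) +
    (-1/3) * f (2,1,0) * g (1,2,0) * h (0,0,3) +
    (-1) * f (3,0,0) * g (0,0,3) * h (0,3,0) +
    (1/3) * f (3,0,0) * g (0,1,2) * h (0,2,1) +
    (-1/3) * f (3,0,0) * g (0,2,1) * h (0,1,2) +
    (1) * f (3,0,0) * g (0,3,0) * h (0,0,3))"
  unfolding R0_def perm3_def sg_def Fc_def idx_def wt_def
  apply simp
  apply (simp only: numeral_2_eq_2 numeral_3_eq_3 One_nat_def)
  apply algebra
  done

lemma R0_alt: "alternating3 R0"
  unfolding alternating3_def R0_explicit by algebra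

lemma cube_vals:
  "cube (a,b,c) (3,0,0) = a^3" "cube (a,b,c) (0,3,0) = b^3" "cube (a,b,c) (0,0,3) = c^3"
  "cube (a,b,c) (2,1,0) = 3*a^2*b" "cube (a,b,c) (2,0,1) = 3*a^2*c" "cube (a,b,c) (1,2,0) = 3*a*b^2"
  "cube (a,b,c) (0,2,1) = 3*b^2*c" "cube (a,b,c) (1,0,2) = 3*a*c^2" "cube (a,b,c) (0,1,2) = 3*b*c^2"
  "cube (a,b,c) (1,1,1) = 6*a*b*c"
  unfolding cube_def pmul_lin[OF form_linform] by (simp_all add: linform_def power2_eq_square power3_eq_cube algebra_simps)

lemma R0_cube: "R0 (cube l) (cube m) (cube n) = (det3 l m n)^3"
proof -
  obtain a1 a2 a3 where l: "l = (a1,a2,a3)" by (cases l) auto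
  obtain b1 b2 b3 where m: "m = (b1,b2,b3)" by (cases m) auto
  obtain c1 c2 c3 where n: "n = (c1,c2,c3)" by (cases n) auto
  show ?thesis unfolding l m n R0_explicit cube_vals det3_def prod.case by algebra
qed

fun lc :: "(complex \<times> lin) list \<Rightarrow> form" where
  "lc [] = (\<lambda>_. 0)"
| "lc ((a,l) # xs) = (\<lambda>m. a * cube l m + lc xs m)"

definition dec :: "form \<Rightarrow> (complex \<times> lin) list" where
  "dec f = [(f (3,0,0), (1,0,0)), (f (0,3,0), (0,1,0)), (f (0,0,3), (0,0,1)),
    (f (2,1,0) / 6, (1,1,0)), (- f (2,1,0) / 6, (1,-1,0)), (- f (2,1,0) / 3, (0,1,0)),
    (f (1,2,0) / 6, (1,1,0)), (f (1,2,0) / 6, (1,-1,0)), (- f (1,2,0) / 3, (1,0,0)),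
    (f (2,0,1) / 6, (1,0,1)), (- f (2,0,1) / 6, (1,0,-1)), (- f (2,0,1) / 3, (0,0,1)),
    (f (1,0,2) / 6, (1,0,1)), (f (1,0,2) / 6, (1,0,-1)), (- f (1,0,2) / 3, (1,0,0)),
    (f (0,2,1) / 6, (0,1,1)), (- f (0,2,1) / 6, (0,1,-1)), (- f (0,2,1) / 3, (0,0,1)),
    (f (0,1,2) / 6, (0,1,1)), (f (0,1,2) / 6, (0,1,-1)), (- f (0,1,2) / 3, (0,1,0)),
    (f (1,1,1) / 24, (1,1,1)), (- f (1,1,1) / 24, (1,1,-1)), (- f (1,1,1) / 24, (1,-1,1)),
    (f (1,1,1) / 24, (1,-1,-1))]"

lemma lc_zero: "mdeg m \<noteq> 3 \<Longrightarrow> lc xs m = 0"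
  by (induction xs rule: lc.induct) (auto simp: form_cube[unfolded is_form_def])

lemma cut3_dec: "cut3 f = lc (dec f)"
proof
  fix m :: mon
  show "cut3 f m = lc (dec f) m"
  proof (cases "mdeg m = 3")
    case True
    then show ?thesis
      using deg3_cases[OF True]
      apply (elim insertE emptyE)
      apply (simp_all only: cut3_def dec_def lc.simps cube_vals)
      by (simp_all add: field_simps mdeg_def)
  next
    case False
    then show ?thesis by (simp add: cut3_def lc_zero)
  qed
qed

lemma tri_rules: assumes "trilinear T"
  shows "\<And>a f f' g h. T (\<lambda>m. a * f m + f' m) g h = a * T f g h + T f' g h"
    "\<And>a f g g' h. T f (\<lambda>m. a * g m + g' m) h = a * T f g h + T f g' h"
    "\<And>a f g h h'. T f g (\<lambda>m. a * h m + h' m) = a * T f g h + T f g h'"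
  using assms unfolding trilinear_def by blast+

lemma tri_zero: assumes "trilinear T"
  shows "T (\<lambda>_. 0) g h = 0" "T f (\<lambda>_. 0) h = 0" "T f g (\<lambda>_. 0) = 0"
  using tri_rules(1)[OF assms, where a="-1" and f="\<lambda>_. 0" and f'="\<lambda>_. 0" and g=g and h=h]
    tri_rules(2)[OF assms, where a="-1" and f=f and g="\<lambda>_. 0" and g'="\<lambda>_. 0" and h=h]
    tri_rules(3)[OF assms, where a="-1" and f=f and g=g and h="\<lambda>_. 0" and h'="\<lambda>_. 0"]
  by simp_all

lemma tri_lc1: "trilinear T \<Longrightarrow> T (lc xs) g h = (\<Sum>(a,l)\<leftarrow>xs. a * T (cube l) g h)"
proof (induction xs rule: lc.induct)
  case 1 then show ?case using tri_zero by simp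
next
  case (2 a l xs) then show ?case using tri_rules[OF "2.prems"] by simp
qed

lemma tri_lc2: "trilinear T \<Longrightarrow> T f (lc xs) h = (\<Sum>(a,l)\<leftarrow>xs. a * T f (cube l) h)"
proof (induction xs rule: lc.induct)
  case 1 then show ?case using tri_zero by simp
next
  case (2 a l xs) then show ?case using tri_rules[OF "2.prems"] by simp
qed

lemma tri_lc3: "trilinear T \<Longrightarrow> T f g (lc xs) = (\<Sum>(a,l)\<leftarrow>xs. a * T f g (cube l))"
proof (induction xs rule: lc.induct)
  case 1 then show ?case using tri_zero by simp
next
  case (2 a l xs) then show ?case using tri_rules[OF "2.prems"] by simp
qed

definition PR :: "(form \<Rightarrow> form \<Rightarrow> form \<Rightarrow> complex) \<Rightarrow> bool" where
  "PR T \<longleftrightarrow> trilinear T \<and> alternating3 T \<and>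
          (\<forall>f g h. T f g h = T (cut3 f) (cut3 g) (cut3 h)) \<and>
          (\<forall>l m n. T (cube l) (cube m) (cube n) = (det3 l m n) ^ 3)"

lemma PR_val: assumes "PR T"
  shows "T f g h = (\<Sum>(c,n)\<leftarrow>dec h. c * (\<Sum>(b,m)\<leftarrow>dec g. b * (\<Sum>(a,l)\<leftarrow>dec f. a * (det3 l m n)^3)))"
proof -
  have t: "trilinear T" and c: "\<And>f g h. T f g h = T (cut3 f) (cut3 g) (cut3 h)"
    and d: "\<And>l m n. T (cube l) (cube m) (cube n) = (det3 l m n) ^ 3"
    using assms unfolding PR_def by auto
  have "T f g h = T (lc (dec f)) (lc (dec g)) (lc (dec h))" using c cut3_dec by metis
  also have "\<dots> = (\<Sum>(c,n)\<leftarrow>dec h. c * (\<Sum>(b,m)\<leftarrow>dec g. b * (\<Sum>(a,l)\<leftarrow>dec f. a * (det3 l m n)^3)))"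
    unfolding tri_lc1[OF t] tri_lc2[OF t] tri_lc3[OF t] d ..
  finally show ?thesis .
qed

lemma PR_R0: "PR R0" unfolding PR_def using R0_tri R0_alt R0_cut R0_cube by blast

lemma R_eq: "R = R0"
proof -
  have "R = (THE T. PR T)" unfolding R_def PR_def by simp
  also have "\<dots> = R0"
  proof (rule the_equality)
    show "PR R0" by (rule PR_R0)
  next
    fix T assume "PR T"
    show "T = R0" by (intro ext) (simp only: PR_val[OF \<open>PR T\<close>] PR_val[OF PR_R0])
  qed
  finally show ?thesis .
qed

theorem mainTheorem10:
  fixes f c :: form
  assumes "is_form 3 f"
    and "hessian f \<noteq> (\<lambda>_. 0)"
    and "is_form 3 c"
  shows "R f (hessian f) c = 0"
proof -
  have f3: "is_form (Suc (Suc (Suc 0))) f" using assms(1) by (simp add: numeral_3_eq_3)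
  have hf: "\<And>a b. is_form 1 (pderiv3 a (pderiv3 b f))"
    using form_pderiv[OF form_pderiv[OF f3]] by simp
  show ?thesis
    unfolding R_eq R0_explicit
    apply (simp add: hessian_def Let_def psub_def padd_def pmul_lin[OF hf])
    apply (simp add: pderiv3_def)
    apply (simp only: numeral_2_eq_2 numeral_3_eq_3 One_nat_def)
    apply algebra
    done
qed

end
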